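(* For every bounded continuous $f:\mathbb{R}^d\to\mathbb{C}$ and every $\epsilon>0$ there exists $n_0\ge1$ such that for every sequence $\{(R_n,B_n)\}_{n=1}^\infty\subseteq\mathcal{D}_d$, $$\Big|\int f\,d\mu_{n_0}-\int f\,d\mu\Big|<\epsilon,$$ where $\mu_n=\delta_{R_1^{-1}B_1}*\delta_{(R_2R_1)^{-1}B_2}*\cdots*\delta_{(R_n\cdots R_1)^{-1}B_n}$ and $\mu$ is the weak limit of $\mu_n$.
   Context: $\mathcal{D}_d$ is the set of pairs $(R,B)$ with $R=\mathrm{diag}(m_1,\dots,m_d)$, $m_1,\dots,m_d\ge2$ integers, and $B$ a nonempty subset of $\{0,\dots,m_1-1\}\times\cdots\times\{0,\dots,m_d-1\}$. For finite $A$, $\delta_A=\frac{1}{\#A}\sum_{a\in A}\delta_a$. For every sequence in $\mathcal{D}_d$ the measures $\mu_n$ converge weakly to a Borel probability measure $\mu$ (the infinite convolution). *)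

theory Defs
  imports "HOL-Analysis.Analysis" "HOL-Probability.Probability"
begin

text \<open>A pair (R,B) in D_d: R = diag(m_1,...,m_d) is represented by its diagonal
  m :: 'd => nat, the digit set B by a set of integer vectors 'd => nat.\<close>
definition in_D :: "('d::finite \<Rightarrow> nat) \<Rightarrow> ('d \<Rightarrow> nat) set \<Rightarrow> bool" where
  "in_D m B \<longleftrightarrow> (\<forall>i. m i \<ge> 2) \<and> B \<noteq> {} \<and> B \<subseteq> {b. \<forall>i. b i < m i}"

definition delta :: "'a set \<Rightarrow> 'a pmf" where
  "delta A = pmf_of_set A"

definition conv_pmf :: "('a::monoid_add) pmf \<Rightarrow> 'a pmf \<Rightarrow> 'a pmf" where
  "conv_pmf p q = map_pmf (\<lambda>(x, y). x + y) (pair_pmf p q)"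

definition scaled_digits ::
  "(nat \<Rightarrow> 'd::finite \<Rightarrow> nat) \<Rightarrow> (nat \<Rightarrow> ('d \<Rightarrow> nat) set) \<Rightarrow> nat \<Rightarrow> (real^'d) set" where
  "scaled_digits m B k =
     (\<lambda>b. \<chi> i. real (b i) / (\<Prod>j\<in>{1..k}. real (m j i))) ` B k"

fun mu_pmf ::
  "(nat \<Rightarrow> 'd::finite \<Rightarrow> nat) \<Rightarrow> (nat \<Rightarrow> ('d \<Rightarrow> nat) set) \<Rightarrow> nat \<Rightarrow> (real^'d) pmf" where
  "mu_pmf m B 0 = return_pmf 0"
| "mu_pmf m B (Suc n) = conv_pmf (mu_pmf m B n) (delta (scaled_digits m B (Suc n)))"

definition weak_conv_meas :: "(nat \<Rightarrow> 'a::metric_space measure) \<Rightarrow> 'a measure \<Rightarrow> bool" where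
  "weak_conv_meas M L \<longleftrightarrow>
     (\<forall>g :: 'a \<Rightarrow> real. continuous_on UNIV g \<and> bounded (range g) \<longrightarrow>
        (\<lambda>n. integral\<^sup>L (M n) g) \<longlonglongrightarrow> integral\<^sup>L L g)"

end

theory Submission imports Defs begin

definition MM :: "(nat \<Rightarrow> 'd::finite \<Rightarrow> nat) \<Rightarrow> nat \<Rightarrow> 'd \<Rightarrow> real" where
  "MM m n i = (\<Prod>j\<in>{1..n}. real (m j i))"

lemma conv_assoc: "conv_pmf (conv_pmf a b) c = conv_pmf a (conv_pmf (b::'a::monoid_add pmf) c)"
  by (simp add: conv_pmf_def pair_pmf_def map_pmf_def bind_assoc_pmf bind_return_pmf add.assoc)

lemma conv_return0: "conv_pmf (return_pmf 0) T = (T::'a::monoid_add pmf)"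
  by (simp add: conv_pmf_def pair_return_pmf1 pmf.map_comp o_def)

lemma set_conv: "set_pmf (conv_pmf a b) = {x + y |x y. x \<in> set_pmf a \<and> y \<in> set_pmf b}"
  by (auto simp: conv_pmf_def)

lemma MM_pos: assumes "\<forall>n\<ge>1. in_D (m n) (B n)" shows "MM m n i \<ge> 2 ^ n"
proof -
  have "(\<Prod>j\<in>{1..n}. (2::real)) \<le> MM m n i" unfolding MM_def
    by (rule prod_mono) (use assms in \<open>auto simp: in_D_def\<close>)
  thus ?thesis by simp
qed

lemma MM_Suc: "MM m (Suc p) i = MM m p i * real (m (Suc p) i)"
  by (simp add: MM_def prod.nat_ivl_Suc' mult.commute)

lemma tail:
  assumes D: "\<forall>n\<ge>1. in_D (m n) (B n)" and np: "n \<le> p"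
  shows "\<exists>T. mu_pmf m B p = conv_pmf (mu_pmf m B n) T \<and>
     (\<forall>y\<in>set_pmf T. \<forall>i. 0 \<le> y$i \<and> y$i \<le> 1 / MM m n i - 1 / MM m p i)"
  using np
proof (induction p rule: dec_induct)
  case base
  show ?case by (rule exI[of _ "return_pmf 0"])
    (simp add: conv_pmf_def pair_return_pmf2 pmf.map_comp o_def)
next
  case (step p)
  then obtain T where T: "mu_pmf m B p = conv_pmf (mu_pmf m B n) T"
    "\<forall>y\<in>set_pmf T. \<forall>i. 0 \<le> y$i \<and> y$i \<le> 1 / MM m n i - 1 / MM m p i" by blast
  let ?S = "scaled_digits m B (Suc p)"
  have inD: "in_D (m (Suc p)) (B (Suc p))" using D by auto
  have fin: "finite (B (Suc p))"
  proof (rule finite_subset)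
    show "B (Suc p) \<subseteq> PiE UNIV (\<lambda>i. {..<m (Suc p) i})"
      using inD by (auto simp: in_D_def PiE_def extensional_def)
    show "finite (PiE UNIV (\<lambda>i. {..<m (Suc p) i}))" by (intro finite_PiE) auto
  qed
  have Sne: "?S \<noteq> {}" "finite ?S" using inD fin by (auto simp: scaled_digits_def in_D_def)
  have setS: "set_pmf (delta ?S) = ?S" using Sne by (simp add: delta_def)
  show ?case
  proof (intro exI conjI ballI allI)
    show "mu_pmf m B (Suc p) = conv_pmf (mu_pmf m B n) (conv_pmf T (delta ?S))"
      by (simp add: T conv_assoc)
  next
    fix z i assume z: "z \<in> set_pmf (conv_pmf T (delta ?S))"
    then obtain y b where yb: "y \<in> set_pmf T" "b \<in> B (Suc p)"
      "z = y + (\<chi> i. real (b i) / MM m (Suc p) i)"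
      unfolding set_conv setS by (auto simp: scaled_digits_def MM_def)
    have Mp: "MM m p i > 0" using MM_pos[OF D, of p i]
      by (meson order_less_le_trans zero_less_numeral zero_less_power)
    have mp: "real (m (Suc p) i) \<ge> 2" using inD by (auto simp: in_D_def)
    have lt: "b i < m (Suc p) i" using inD yb(2) by (auto simp: in_D_def)
    have "real (b i + 1) \<le> real (m (Suc p) i)" using lt by (simp only: of_nat_le_iff)
    hence bl: "real (b i) \<le> real (m (Suc p) i) - 1" by simp
    have y: "0 \<le> y$i" "y$i \<le> 1 / MM m n i - 1 / MM m p i" using T(2) yb(1) by auto
    have e: "1 / MM m p i - 1 / MM m (Suc p) i = (real (m (Suc p) i) - 1) / MM m (Suc p) i"
      using Mp mp by (simp add: MM_Suc field_simps)
    have "real (b i) / MM m (Suc p) i \<le> (real (m (Suc p) i) - 1) / MM m (Suc p) i"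
      using bl Mp mp by (intro divide_right_mono) (auto simp: MM_Suc)
    moreover have "0 \<le> real (b i) / MM m (Suc p) i" using Mp mp by (simp add: MM_Suc)
    ultimately show "0 \<le> z$i" "z$i \<le> 1 / MM m n i - 1 / MM m (Suc p) i"
      using y e yb(3) by auto
  qed
qed


lemma supp_mu:
  assumes D: "\<forall>n\<ge>1. in_D (m n) (B n)"
  shows "\<forall>x\<in>set_pmf (mu_pmf m B p). \<forall>i. 0 \<le> x$i \<and> x$i \<le> 1"
proof -
  obtain T where T: "mu_pmf m B p = conv_pmf (mu_pmf m B 0) T"
     "\<forall>y\<in>set_pmf T. \<forall>i. 0 \<le> y$i \<and> y$i \<le> 1 / MM m 0 i - 1 / MM m p i"
    using tail[OF D, of 0 p] by auto
  have Mp: "MM m p i > 0" for i using MM_pos[OF D, of p i]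
    by (meson order_less_le_trans zero_less_numeral zero_less_power)
  have "mu_pmf m B p = T" using T(1) by (simp add: conv_return0)
  thus ?thesis using T(2) Mp by (auto simp: MM_def) (smt (verit) divide_pos_pos)+
qed

lemma pmf_integrable:
  fixes g :: "'a \<Rightarrow> complex"
  assumes "\<And>x. norm (g x) \<le> C"
  shows "integrable (measure_pmf p) g"
  by (rule measure_pmf.integrable_const_bound[where B=C]) (auto simp: assms)

theorem lemma5p5:
  fixes f :: "real^'d \<Rightarrow> complex" and \<epsilon> :: real
  assumes "continuous_on UNIV f" and "bounded (range f)" and "\<epsilon> > 0"
  shows "\<exists>n0\<ge>1. \<forall>(m :: nat \<Rightarrow> 'd \<Rightarrow> nat) (B :: nat \<Rightarrow> ('d \<Rightarrow> nat) set) (\<mu> :: (real^'d) measure).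
           (\<forall>n\<ge>1. in_D (m n) (B n)) \<and> prob_space \<mu> \<and> sets \<mu> = sets borel \<and>
           weak_conv_meas (\<lambda>n. measure_pmf (mu_pmf m B n)) \<mu> \<longrightarrow>
           cmod ((\<integral>x. f x \<partial>measure_pmf (mu_pmf m B n0)) - (\<integral>x. f x \<partial>\<mu>)) < \<epsilon>"
proof -
  obtain C where C: "\<And>x. norm (f x) \<le> C" using assms(2) by (auto simp: bounded_iff)
  define K :: "(real^'d) set" where "K = cbox 0 (\<chi> i. 2)"
  have Kmem: "x \<in> K \<longleftrightarrow> (\<forall>i. 0 \<le> x$i \<and> x$i \<le> 2)" for x
    by (simp add: K_def mem_box_cart)
  have "uniformly_continuous_on K f"
    by (rule compact_uniformly_continuous) (auto simp: K_def intro: continuous_on_subset[OF assms(1)])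
  then obtain \<delta> where dpos: "\<delta> > 0" and dU: "\<And>x x'. x \<in> K \<Longrightarrow> x' \<in> K \<Longrightarrow> dist x' x < \<delta> \<Longrightarrow>
      dist (f x') (f x) < \<epsilon>/2"
    using assms(3) unfolding uniformly_continuous_on_def by (meson half_gt_zero)
  have cpos: "real CARD('d) > 0" by simp
  obtain k where k: "(1/2::real)^k < \<delta> / real CARD('d)"
    using real_arch_pow_inv[of "\<delta> / real CARD('d)" "1/2"] dpos cpos by auto
  define n0 where "n0 = Suc k"
  have n0: "real CARD('d) / 2^n0 < \<delta>"
  proof -
    have "(1/2::real)^n0 \<le> (1/2)^k" unfolding n0_def by (simp add: power_decreasing)
    hence "(1/2::real)^n0 < \<delta> / real CARD('d)" using k by linarith
    thus ?thesis using cpos by (simp add: field_simps power_divide)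
  qed
  show ?thesis
  proof (intro exI[of _ n0] conjI allI impI)
    show "1 \<le> n0" by (simp add: n0_def)
  next
    fix m :: "nat \<Rightarrow> 'd \<Rightarrow> nat" and B :: "nat \<Rightarrow> ('d \<Rightarrow> nat) set" and \<mu> :: "(real^'d) measure"
    assume H: "(\<forall>n\<ge>1. in_D (m n) (B n)) \<and> prob_space \<mu> \<and> sets \<mu> = sets borel \<and>
           weak_conv_meas (\<lambda>n. measure_pmf (mu_pmf m B n)) \<mu>"
    hence D: "\<forall>n\<ge>1. in_D (m n) (B n)" and P: "prob_space \<mu>" and S: "sets \<mu> = sets borel"
      and W: "weak_conv_meas (\<lambda>n. measure_pmf (mu_pmf m B n)) \<mu>" by auto
    define g where "g p = (\<integral>x. f x \<partial>measure_pmf (mu_pmf m B p))" for p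
    define L where "L = (\<integral>x. f x \<partial>\<mu>)"
    have bound: "norm (g p - g n0) \<le> \<epsilon>/2" if p: "p \<ge> n0" for p
    proof -
      obtain T where T: "mu_pmf m B p = conv_pmf (mu_pmf m B n0) T"
        "\<forall>y\<in>set_pmf T. \<forall>i. 0 \<le> y$i \<and> y$i \<le> 1 / MM m n0 i - 1 / MM m p i"
        using tail[OF D p] by auto
      let ?P = "pair_pmf (mu_pmf m B n0) T"
      have g1: "g p = (\<integral>z. f (fst z + snd z) \<partial>measure_pmf ?P)"
        unfolding g_def T(1) conv_pmf_def integral_map_pmf by (simp add: case_prod_beta)
      have g2: "g n0 = (\<integral>z. f (fst z) \<partial>measure_pmf ?P)"
        unfolding g_def by (subst (1) map_fst_pair_pmf[symmetric, of _ T]) (simp only: integral_map_pmf)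
      have "g p - g n0 = (\<integral>z. f (fst z + snd z) - f (fst z) \<partial>measure_pmf ?P)"
        unfolding g1 g2 by (rule Bochner_Integration.integral_diff[symmetric]) (rule pmf_integrable, rule C)+
      also have "norm \<dots> \<le> (\<integral>z. norm (f (fst z + snd z) - f (fst z)) \<partial>measure_pmf ?P)"
        by (rule integral_norm_bound)
      also have "\<dots> \<le> \<epsilon>/2"
      proof (rule measure_pmf.integral_le_const)
        show "integrable (measure_pmf ?P) (\<lambda>z. norm (f (fst z + snd z) - f (fst z)))"
          by (rule measure_pmf.integrable_const_bound[where B="2*C"]) 
             (auto intro!: AE_pmfI norm_triangle_le_diff[THEN order_trans] simp: C add_mono, smt (verit) C)
        show "AE z in measure_pmf ?P. norm (f (fst z + snd z) - f (fst z)) \<le> \<epsilon>/2"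
        proof (rule AE_pmfI)
          fix z assume z: "z \<in> set_pmf ?P"
          obtain x y where xy: "z = (x, y)" "x \<in> set_pmf (mu_pmf m B n0)" "y \<in> set_pmf T"
            using z by (cases z) auto
          have x: "0 \<le> x$i \<and> x$i \<le> 1" for i using supp_mu[OF D, of n0] xy(2) by auto
          have Mn: "MM m n0 i \<ge> 2^n0" for i using MM_pos[OF D] .
          have Mp: "MM m p i > 0" for i using MM_pos[OF D, of p i]
            by (meson order_less_le_trans zero_less_numeral zero_less_power)
          have y: "0 \<le> y$i \<and> y$i \<le> 1/2^n0" for i
          proof -
            have "1 / MM m n0 i \<le> 1/2^n0" using Mn[of i] by (simp add: frac_le)
            moreover have "1 / MM m p i > 0" using Mp[of i] by simp
            moreover have "0 \<le> y$i \<and> y$i \<le> 1 / MM m n0 i - 1 / MM m p i" using T(2) xy(3) by blast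
            ultimately show ?thesis by linarith
          qed
          have h1: "(1::real)/2^n0 \<le> 1" by simp
          have a1: "0 \<le> (x+y)$i \<and> (x+y)$i \<le> 2" for i
            using x[of i] y[of i] h1 vector_add_component[of x y i] by linarith
          have a2: "0 \<le> x$i \<and> x$i \<le> 2" for i using x[of i] by linarith
          have xK: "x \<in> K" and xyK: "x + y \<in> K" unfolding Kmem using a1 a2 by blast+
          have "norm y \<le> (\<Sum>i\<in>UNIV. \<bar>y$i\<bar>)" by (rule norm_le_l1_cart)
          also have "\<dots> \<le> (\<Sum>i\<in>(UNIV::'d set). 1/2^n0)" using y by (intro sum_mono) auto
          also have "\<dots> = real CARD('d) / 2^n0" by simp
          finally have "norm y < \<delta>" using n0 by linarith
          hence "dist (x + y) x < \<delta>" by (simp add: dist_norm)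
          hence "dist (f (x+y)) (f x) < \<epsilon>/2" using dU[OF xK xyK] by blast
          thus "norm (f (fst z + snd z) - f (fst z)) \<le> \<epsilon>/2" using xy(1) by (simp add: dist_norm)
        qed
      qed
      finally show ?thesis .
    qed
    have fmeas: "f \<in> borel_measurable \<mu>"
      using borel_measurable_continuous_onI[OF assms(1)] measurable_cong_sets[OF S refl] by blast
    have intmu: "integrable \<mu> f"
      using prob_space.finite_measure[OF P] fmeas C
      by (intro finite_measure.integrable_const_bound[of _ _ C]) auto
    have lim: "g \<longlonglongrightarrow> L"
    proof -
      have W': "(\<lambda>n. \<integral>x. h x \<partial>measure_pmf (mu_pmf m B n)) \<longlonglongrightarrow> (\<integral>x. h x \<partial>\<mu>)"
        if "continuous_on UNIV h" "bounded (range h)" for h :: "real^'d \<Rightarrow> real"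
        using W that unfolding weak_conv_meas_def by blast
      have cRe: "continuous_on UNIV (\<lambda>x. Re (f x))" and cIm: "continuous_on UNIV (\<lambda>x. Im (f x))"
        using assms(1) by (auto intro: continuous_intros)
      have bRe: "bounded (range (\<lambda>x. Re (f x)))" and bIm: "bounded (range (\<lambda>x. Im (f x)))"
        using C by (auto simp: bounded_iff intro!: exI[of _ C] abs_Re_le_cmod[THEN order_trans] abs_Im_le_cmod[THEN order_trans])
      have "(\<lambda>n. Complex (\<integral>x. Re (f x) \<partial>measure_pmf (mu_pmf m B n)) (\<integral>x. Im (f x) \<partial>measure_pmf (mu_pmf m B n)))
            \<longlonglongrightarrow> Complex (\<integral>x. Re (f x) \<partial>\<mu>) (\<integral>x. Im (f x) \<partial>\<mu>)"
        by (intro tendsto_Complex W' cRe cIm bRe bIm)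
      moreover have "Complex (\<integral>x. Re (f x) \<partial>\<mu>) (\<integral>x. Im (f x) \<partial>\<mu>) = L"
        unfolding L_def by (simp add: integral_Re[OF intmu] integral_Im[OF intmu] complex_eq_iff)
      moreover have "Complex (\<integral>x. Re (f x) \<partial>measure_pmf (mu_pmf m B n)) (\<integral>x. Im (f x) \<partial>measure_pmf (mu_pmf m B n)) = g n" for n
        using pmf_integrable[of f C, OF C] unfolding g_def
        by (simp add: integral_Re integral_Im complex_eq_iff)
      ultimately show ?thesis by simp
    qed
    have "(\<lambda>p. norm (g p - g n0)) \<longlonglongrightarrow> norm (L - g n0)"
      by (intro tendsto_intros lim)
    hence "norm (L - g n0) \<le> \<epsilon>/2"
      by (rule LIMSEQ_le_const2) (use bound in auto)
    thus "cmod (g n0 - L) < \<epsilon>" using assms(3) by (simp add: norm_minus_commute)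
  qed
qed

end
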